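(* Let $L:\mathcal{R}\to\mathbb{R}^{\mathcal{Y}}_+$ be a loss with a finite representative set, and let $\mathcal{R}'$ be the union of all minimum representative sets for $L$. Then $\mathcal{R}'=\mathcal{R}\setminus\mathrm{red}(L)$.
   Context: $\mathcal{Y}$ is a finite label set, $\Delta_{\mathcal{Y}}$ the simplex, $\mathbb{R}^{\mathcal{Y}}_+$ the nonnegative orthant. A loss $L:\mathcal{R}\to\mathbb{R}^{\mathcal{Y}}_+$ is minimizable if $\inf_r\langle p,L(r)\rangle$ is attained for every $p$; it then elicits $\Gamma=\mathrm{prop}[L]$, $\Gamma(p)=\arg\min_r\langle p,L(r)\rangle$, with level sets $\Gamma_r=\{p:r\in\Gamma(p)\}$. $\mathcal{S}$ is representative for $L$ if $\Gamma(p)\cap\mathcal{S}\neq\emptyset$ for all $p$; minimum representative if of smallest cardinality. $\mathrm{red}(L)=\{r\in\mathcal{R}:\exists r'\in\mathcal{R},\ \Gamma_r\subsetneq\Gamma_{r'}\}$ is the set of strictly redundant reports. *)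

theory Defs
  imports Complex_Main
begin

text \<open>Labels: a finite type 'y. Reports: the type 'r (the report set R is UNIV).
  A loss is a map L :: 'r \<Rightarrow> ('y \<Rightarrow> real).\<close>

definition simplex :: "('y::finite \<Rightarrow> real) set" where
  "simplex = {p. (\<forall>y. 0 \<le> p y) \<and> (\<Sum>y\<in>UNIV. p y) = 1}"

definition exp_loss :: "('y::finite \<Rightarrow> real) \<Rightarrow> ('y \<Rightarrow> real) \<Rightarrow> real" where
  "exp_loss p l = (\<Sum>y\<in>UNIV. p y * l y)"

definition nonneg_loss :: "('r \<Rightarrow> ('y::finite \<Rightarrow> real)) \<Rightarrow> bool" where
  "nonneg_loss L \<longleftrightarrow> (\<forall>r y. 0 \<le> L r y)"

definition minimizable :: "('r \<Rightarrow> ('y::finite \<Rightarrow> real)) \<Rightarrow> bool" where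
  "minimizable L \<longleftrightarrow> (\<forall>p\<in>simplex. \<exists>r. \<forall>r'. exp_loss p (L r) \<le> exp_loss p (L r'))"

definition prop_of :: "('r \<Rightarrow> ('y::finite \<Rightarrow> real)) \<Rightarrow> ('y \<Rightarrow> real) \<Rightarrow> 'r set" where
  "prop_of L p = {r. \<forall>r'. exp_loss p (L r) \<le> exp_loss p (L r')}"

definition level_set :: "('r \<Rightarrow> ('y::finite \<Rightarrow> real)) \<Rightarrow> 'r \<Rightarrow> ('y \<Rightarrow> real) set" where
  "level_set L r = {p\<in>simplex. r \<in> prop_of L p}"

definition representative :: "('r \<Rightarrow> ('y::finite \<Rightarrow> real)) \<Rightarrow> 'r set \<Rightarrow> bool" where
  "representative L S \<longleftrightarrow> (\<forall>p\<in>simplex. prop_of L p \<inter> S \<noteq> {})"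

text \<open>Minimum representative: representative and of smallest cardinality, i.e.
  |S| \<le> |T| (injection of S into T) for every representative T.\<close>
definition min_representative :: "('r \<Rightarrow> ('y::finite \<Rightarrow> real)) \<Rightarrow> 'r set \<Rightarrow> bool" where
  "min_representative L S \<longleftrightarrow> representative L S \<and>
     (\<forall>T. representative L T \<longrightarrow> (\<exists>f. inj_on f S \<and> f ` S \<subseteq> T))"

definition red :: "('r \<Rightarrow> ('y::finite \<Rightarrow> real)) \<Rightarrow> 'r set" where
  "red L = {r. \<exists>r'. level_set L r \<subset> level_set L r'}"

end

theory Submission
  imports Defs
begin

lemma exp_loss_avg:
  fixes c :: "'s \<Rightarrow> ('y::finite \<Rightarrow> real)"
  assumes "finite W"
  shows "exp_loss (\<lambda>y. (\<Sum>w\<in>W. c w y) / real (card W)) l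
       = (\<Sum>w\<in>W. exp_loss (c w) l) / real (card W)"
proof -
  have "exp_loss (\<lambda>y. (\<Sum>w\<in>W. c w y) / real (card W)) l
      = (\<Sum>y\<in>UNIV. (\<Sum>w\<in>W. c w y * l y)) / real (card W)"
    unfolding exp_loss_def by (simp add: sum_divide_distrib sum_distrib_right)
  also have "\<dots> = (\<Sum>w\<in>W. exp_loss (c w) l) / real (card W)"
    unfolding exp_loss_def by (subst sum.swap) simp
  finally show ?thesis .
qed

lemma key:
  fixes L :: "'r \<Rightarrow> ('y::finite \<Rightarrow> real)"
  assumes fin: "finite S" and rep: "representative L S" and p0: "p0 \<in> level_set L r"
  shows "\<exists>s\<in>S. level_set L r \<subseteq> level_set L s"
proof -
  define W where "W = {s\<in>S. \<not> level_set L r \<subseteq> level_set L s}"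
  show ?thesis
  proof (cases "W = {}")
    case True
    have "p0 \<in> simplex" using p0 by (simp add: level_set_def)
    then obtain s where "s \<in> S" using rep unfolding representative_def by blast
    then show ?thesis using True W_def by blast
  next
    case False
    have finW: "finite W" using fin W_def by simp
    have "\<forall>w\<in>W. \<exists>c. c \<in> level_set L r \<and> c \<notin> level_set L w" using W_def by blast
    from bchoice[OF this] obtain c where c0: "\<forall>w\<in>W. c w \<in> level_set L r \<and> c w \<notin> level_set L w"
      by blast
    then have c: "\<And>w. w \<in> W \<Longrightarrow> c w \<in> level_set L r \<and> c w \<notin> level_set L w"
      by blast
    define m where "m = real (card W)"
    have mpos: "m > 0" using False finW m_def by (simp add: card_gt_0_iff)
    define q where "q = (\<lambda>y. (\<Sum>w\<in>W. c w y) / m)"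
    have ql: "\<And>l. exp_loss q l = (\<Sum>w\<in>W. exp_loss (c w) l) / m"
      using exp_loss_avg[OF finW, of c] unfolding q_def m_def by blast
    have csimp: "\<And>w. w \<in> W \<Longrightarrow> c w \<in> simplex" using c by (simp add: level_set_def)
    have copt: "\<And>w r'. w \<in> W \<Longrightarrow> exp_loss (c w) (L r) \<le> exp_loss (c w) (L r')"
      using c by (simp add: level_set_def prop_of_def)
    have "q \<in> simplex"
    proof -
      have "\<forall>y. 0 \<le> q y"
      proof
        fix y
        have "0 \<le> (\<Sum>w\<in>W. c w y)" using csimp by (intro sum_nonneg) (simp add: simplex_def)
        then show "0 \<le> q y" unfolding q_def using mpos by simp
      qed
      moreover have "(\<Sum>y\<in>UNIV. q y) = (\<Sum>w\<in>W. (\<Sum>y\<in>UNIV. c w y)) / m"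
        unfolding q_def by (simp add: sum_divide_distrib[symmetric]) (subst sum.swap, simp)
      moreover have "(\<Sum>w\<in>W. (\<Sum>y\<in>UNIV. c w y)) = m"
        using csimp m_def by (simp add: simplex_def)
      ultimately show ?thesis using mpos by (simp add: simplex_def)
    qed
    then obtain s where s: "s \<in> S" "s \<in> prop_of L q" using rep unfolding representative_def by blast
    have le1: "exp_loss q (L s) \<le> exp_loss q (L r)" using s by (simp add: prop_of_def)
    have "(\<Sum>w\<in>W. exp_loss (c w) (L s) - exp_loss (c w) (L r)) = 0"
    proof -
      have "(\<Sum>w\<in>W. exp_loss (c w) (L s) - exp_loss (c w) (L r))
          = m * (exp_loss q (L s) - exp_loss q (L r))"
        using mpos by (simp add: ql sum_subtractf algebra_simps)
      moreover have "(\<Sum>w\<in>W. exp_loss (c w) (L s) - exp_loss (c w) (L r)) \<ge> 0"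
        using copt by (simp add: sum_nonneg)
      moreover have "m * (exp_loss q (L s) - exp_loss q (L r)) \<le> 0"
        using le1 mpos by (intro mult_nonneg_nonpos) auto
      ultimately show ?thesis by linarith
    qed
    moreover have "\<forall>w\<in>W. 0 \<le> exp_loss (c w) (L s) - exp_loss (c w) (L r)"
      using copt by simp
    ultimately have "\<forall>w\<in>W. exp_loss (c w) (L s) - exp_loss (c w) (L r) = 0"
      using sum_nonneg_eq_0_iff[OF finW, of "\<lambda>w. exp_loss (c w) (L s) - exp_loss (c w) (L r)"]
      by blast
    then have eq: "\<And>w. w \<in> W \<Longrightarrow> exp_loss (c w) (L s) = exp_loss (c w) (L r)"
      by simp
    have "s \<notin> W"
    proof
      assume sW: "s \<in> W"
      then have "c s \<in> level_set L s"
        using eq[OF sW] copt[OF sW] csimp[OF sW] by (simp add: level_set_def prop_of_def)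
      then show False using c[OF sW] by blast
    qed
    then show ?thesis using s W_def by blast
  qed
qed

lemma simplex_ne: "(\<lambda>y::'y::finite. 1 / real (card (UNIV::'y set))) \<in> simplex"
proof -
  have c: "real (card (UNIV::'y set)) > 0" by (simp add: card_gt_0_iff)
  have "(\<Sum>y\<in>(UNIV::'y set). 1 / real (card (UNIV::'y set))) = 1"
    using c by simp
  then show ?thesis unfolding simplex_def by simp
qed

lemma min_rep_finite:
  assumes "min_representative L S" "finite S0" "representative L S0"
  shows "finite S \<and> (\<forall>T. finite T \<and> representative L T \<longrightarrow> card S \<le> card T)"
proof -
  obtain f where f: "inj_on f S" "f ` S \<subseteq> S0"
    using assms unfolding min_representative_def by blast
  have "finite S"
    using f assms(2) finite_imageD finite_subset by blast
  moreover have "\<forall>T. finite T \<and> representative L T \<longrightarrow> card S \<le> card T"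
  proof (intro allI impI)
    fix T assume T: "finite T \<and> representative L T"
    then obtain g where "inj_on g S" "g ` S \<subseteq> T"
      using assms unfolding min_representative_def by blast
    then show "card S \<le> card T" using T card_inj_on_le by blast
  qed
  ultimately show ?thesis by blast
qed

lemma min_rep_intro:
  assumes "finite S" "representative L S"
    "\<forall>T. finite T \<and> representative L T \<longrightarrow> card S \<le> card T"
  shows "min_representative L S"
  unfolding min_representative_def
proof (intro conjI allI impI)
  show "representative L S" by fact
  fix T assume T: "representative L T"
  show "\<exists>f. inj_on f S \<and> f ` S \<subseteq> T"
  proof (cases "finite T")
    case True
    have "card S \<le> card T" using assms(3) True T by blast
    then obtain f where "f ` S \<subseteq> T" "inj_on f S" using card_le_inj[OF assms(1) True] by blast
    then show ?thesis by blast
  next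
    case False
    then obtain T' where "T' \<subseteq> T" "finite T'" "card T' = card S"
      using infinite_arbitrarily_large by blast
    then obtain f where "f ` S \<subseteq> T'" "inj_on f S" using card_le_inj[of S T'] assms(1) by auto
    then show ?thesis using \<open>T' \<subseteq> T\<close> by blast
  qed
qed

theorem proposition5:
  fixes L :: "'r \<Rightarrow> ('y::finite \<Rightarrow> real)"
  assumes "nonneg_loss L"
    and "minimizable L"
    and "\<exists>S. finite S \<and> representative L S"
  shows "\<Union>{S. min_representative L S} = UNIV - red L"
proof (rule equalityI)
  obtain S0 where S0: "finite S0" "representative L S0" using assms(3) by blast
  show "\<Union>{S. min_representative L S} \<subseteq> UNIV - red L"
  proof
    fix r assume "r \<in> \<Union>{S. min_representative L S}"
    then obtain S where S: "min_representative L S" "r \<in> S" by blast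
    have Sf: "finite S" and Sc: "\<And>T. finite T \<Longrightarrow> representative L T \<Longrightarrow> card S \<le> card T"
      using min_rep_finite[OF S(1) S0] by auto
    have Srep: "representative L S" using S(1) min_representative_def by blast
    have "r \<notin> red L"
    proof
      assume "r \<in> red L"
      then obtain r' where r': "level_set L r \<subset> level_set L r'" by (auto simp: red_def)
      then obtain p0 where "p0 \<in> level_set L r'" by blast
      then obtain s where s: "s \<in> S" "level_set L r' \<subseteq> level_set L s"
        using key[OF Sf Srep] by blast
      have "s \<noteq> r" using s r' by blast
      have "representative L (S - {r})"
        unfolding representative_def
      proof
        fix p :: "'y \<Rightarrow> real" assume p: "p \<in> simplex"
        then obtain t where t: "t \<in> S" "t \<in> prop_of L p" using Srep unfolding representative_def by blast
        show "prop_of L p \<inter> (S - {r}) \<noteq> {}"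
        proof (cases "t = r")
          case True
          then have "p \<in> level_set L s" using t p r' s by (auto simp: level_set_def)
          then show ?thesis using s \<open>s \<noteq> r\<close> by (auto simp: level_set_def)
        next
          case False then show ?thesis using t by blast
        qed
      qed
      then have "card S \<le> card (S - {r})" using Sc Sf by simp
      moreover have "card S > 0" using Sf S(2) by (auto simp: card_gt_0_iff)
      ultimately show False using Sf S(2) by simp
    qed
    then show "r \<in> UNIV - red L" by simp
  qed
  show "UNIV - red L \<subseteq> \<Union>{S. min_representative L S}"
  proof
    fix r assume "r \<in> UNIV - red L"
    then have nr: "\<And>r'. \<not> level_set L r \<subset> level_set L r'" by (auto simp: red_def)
    have ne: "level_set L r \<noteq> {}"
    proof
      assume E: "level_set L r = {}"
      obtain r' where "\<forall>r''. exp_loss (\<lambda>y. 1 / real (card (UNIV::'y set))) (L r') \<le> exp_loss (\<lambda>y. 1 / real (card (UNIV::'y set))) (L r'')"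
        using assms(2) simplex_ne unfolding minimizable_def by blast
      then have "(\<lambda>y. 1 / real (card (UNIV::'y set))) \<in> level_set L r'"
        using simplex_ne by (simp add: level_set_def prop_of_def)
      then show False using nr[of r'] E by blast
    qed
    then obtain p0 where p0: "p0 \<in> level_set L r" by blast
    define P where "P = (\<lambda>n. \<exists>S. finite S \<and> representative L S \<and> card S = n)"
    have "P (card S0)" using S0 P_def by blast
    then have "P (LEAST n. P n)" by (rule LeastI)
    then obtain S where S: "finite S" "representative L S" "card S = (LEAST n. P n)"
      using P_def by blast
    have Smin: "\<forall>T. finite T \<and> representative L T \<longrightarrow> card S \<le> card T"
      using S(3) P_def by (auto intro: Least_le)
    obtain s where s: "s \<in> S" "level_set L r \<subseteq> level_set L s"
      using key[OF S(1) S(2) p0] by blast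
    have eqls: "level_set L r = level_set L s" using s nr[of s] by blast
    show "r \<in> \<Union>{S. min_representative L S}"
    proof (cases "r \<in> S")
      case True
      then show ?thesis using min_rep_intro[OF S(1) S(2) Smin] by blast
    next
      case False
      define S' where "S' = insert r (S - {s})"
      have f': "finite S'" using S(1) S'_def by simp
      have c': "card S' = card S" using False s S(1) S'_def card_gt_0_iff[of S] by auto
      have "representative L S'"
        unfolding representative_def
      proof
        fix p :: "'y \<Rightarrow> real" assume p: "p \<in> simplex"
        then obtain t where t: "t \<in> S" "t \<in> prop_of L p" using S(2) unfolding representative_def by blast
        show "prop_of L p \<inter> S' \<noteq> {}"
        proof (cases "t = s")
          case True
          then have "p \<in> level_set L r" using t p eqls by (auto simp: level_set_def)
          then show ?thesis using S'_def by (auto simp: level_set_def)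
        next
          case False then show ?thesis using t S'_def by blast
        qed
      qed
      then have "min_representative L S'" using min_rep_intro[OF f'] c' Smin by simp
      then show ?thesis using S'_def by blast
    qed
  qed
qed

end
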